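(* Let $\{Q(C;\alpha)\}$ be a filtration of simplicial complexes on a finite set $C$. For every $\alpha\ge0$, the inclusion $\mathrm{HoPeS}(C;\alpha)\to Q(C;\alpha)$ induces an isomorphism $H_1(\mathrm{HoPeS}(C;\alpha);\mathbb{Z}_2)\to H_1(Q(C;\alpha);\mathbb{Z}_2)$.
   Context: A filtration on a finite set $C$: nested finite simplicial complexes $Q(C;\alpha)$, $\alpha\ge0$, with vertex set $C$, $Q(C;0)=C$, each simplex entering at a minimal scale; the final complex is connected. Edge length $|e|=2\min\{\alpha:e\subset Q(C;\alpha)\}$. $\mathrm{MST}(C)$ is a minimum total length spanning tree on $C$ using edges of the filtration; $\mathrm{MST}(C;\alpha)$ removes from it all open edges of length $>2\alpha$. Homology with $\mathbb{Z}_2$ coefficients. An edge is critical if its addition creates a new class in $H_1$ that does not immediately die; its birth is its entry scale. Deaths of critical edges: at scale $\alpha$, let $K_1,\dots,K_s$ be the critical edges with birth $\le\alpha$ not yet assigned a death; $[K_1],\dots,[K_s]$ form a basis of $H_1((\mathrm{MST}(C;\alpha)\cup\bigcup K_j)/\mathrm{MST}(C;\alpha))$; let $f$ be the map into $H_1(Q(C;\alpha)/\mathrm{MST}(C;\alpha))$ induced by inclusion; take a basis $b_1,\dots,b_r$ of $\ker f$, $b_i=\sum_j c_{ij}[K_j]$, and solve $\sum_j c_{ij}x_j=0$ over $\mathbb{Z}_2$ with $r$ leading variables chosen by the elder rule (the leading set whose critical edges have greatest combined birth); each $K_i$ with $i$ leading gets death $\alpha$. $\mathrm{HoPeS}(C)$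 is the union of $\mathrm{MST}(C)$ and all critical edges labelled by (birth, death). The reduced skeleton $\mathrm{HoPeS}(C;\alpha)$ is obtained from $\mathrm{HoPeS}(C)$ by removing all edges of length $>2\alpha$ and all critical edges with death $\le\alpha$. *)

theory Defs
  imports Main "HOL-Library.Extended_Real"
begin

text \<open>The whole filtration is given by
  the final complex K (a set of simplices) together with the entry scale ent of every
  simplex; Q(C;alpha) consists of the simplices of K with entry scale at most alpha.\<close>

definition filtration :: "'v set \<Rightarrow> 'v set set \<Rightarrow> ('v set \<Rightarrow> real) \<Rightarrow> bool" where
  "filtration C K ent \<longleftrightarrow>
     finite C
   \<and> (\<forall>\<sigma>\<in>K. \<sigma> \<noteq> {} \<and> \<sigma> \<subseteq> C)
   \<and> (\<forall>\<sigma>\<in>K. \<forall>\<tau>. \<tau> \<noteq> {} \<and> \<tau> \<subseteq> \<sigma> \<longrightarrow> \<tau> \<in> K)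
   \<and> (\<forall>v\<in>C. {v} \<in> K)
   \<and> (\<forall>\<sigma>\<in>K. 0 \<le> ent \<sigma>)
   \<and> (\<forall>\<sigma>\<in>K. \<forall>\<tau>. \<tau> \<noteq> {} \<and> \<tau> \<subseteq> \<sigma> \<longrightarrow> ent \<tau> \<le> ent \<sigma>)
   \<and> {\<sigma>\<in>K. ent \<sigma> \<le> 0} = {{v} | v. v \<in> C}"

definition Qc :: "'v set set \<Rightarrow> ('v set \<Rightarrow> real) \<Rightarrow> real \<Rightarrow> 'v set set" where
  "Qc K ent \<alpha> = {\<sigma>\<in>K. ent \<sigma> \<le> \<alpha>}"

definition edges :: "'v set set \<Rightarrow> 'v set set" where
  "edges X = {e\<in>X. card e = 2}"

definition triangles :: "'v set set \<Rightarrow> 'v set set" where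
  "triangles X = {t\<in>X. card t = 3}"

definition vertices_cplx :: "'v set \<Rightarrow> 'v set set" where
  "vertices_cplx C = {{v} | v. v \<in> C}"

definition edge_len :: "('v set \<Rightarrow> real) \<Rightarrow> 'v set \<Rightarrow> real" where
  "edge_len ent e = 2 * ent e"

definition adj :: "'v set set \<Rightarrow> ('v \<times> 'v) set" where
  "adj E = {(u, v). {u, v} \<in> E}"

definition graph_connected :: "'v set \<Rightarrow> 'v set set \<Rightarrow> bool" where
  "graph_connected C E \<longleftrightarrow> (\<forall>u\<in>C. \<forall>v\<in>C. (u, v) \<in> (adj E)\<^sup>*)"

definition spanning_tree :: "'v set \<Rightarrow> 'v set set \<Rightarrow> 'v set set \<Rightarrow> bool" where
  "spanning_tree C K T \<longleftrightarrow> T \<subseteq> edges K \<and> graph_connected C T \<and> card T = card C - 1"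

definition is_MST :: "'v set \<Rightarrow> 'v set set \<Rightarrow> ('v set \<Rightarrow> real) \<Rightarrow> 'v set set \<Rightarrow> bool" where
  "is_MST C K ent T \<longleftrightarrow> spanning_tree C K T \<and>
     (\<forall>T'. spanning_tree C K T' \<longrightarrow> (\<Sum>e\<in>T. edge_len ent e) \<le> (\<Sum>e\<in>T'. edge_len ent e))"

definition MST_at :: "'v set \<Rightarrow> ('v set \<Rightarrow> real) \<Rightarrow> 'v set set \<Rightarrow> real \<Rightarrow> 'v set set" where
  "MST_at C ent T \<alpha> = vertices_cplx C \<union> {e\<in>T. edge_len ent e \<le> 2 * \<alpha>}"

text \<open>Z_2-chains are finite sets of simplices; addition is symmetric difference.\<close>
definition symdiff :: "'a set \<Rightarrow> 'a set \<Rightarrow> 'a set" where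
  "symdiff A B = (A - B) \<union> (B - A)"

definition bd1 :: "'v set set \<Rightarrow> 'v set" where
  "bd1 z = {v. odd (card {e\<in>z. v \<in> e})}"

definition bd2 :: "'v set set \<Rightarrow> 'v set set" where
  "bd2 d = {e. card e = 2 \<and> odd (card {t\<in>d. e \<subseteq> t})}"

definition cycles1 :: "'v set set \<Rightarrow> 'v set set set" where
  "cycles1 X = {z. z \<subseteq> edges X \<and> bd1 z = {}}"

definition homologous :: "'v set set \<Rightarrow> 'v set set \<Rightarrow> 'v set set \<Rightarrow> bool" where
  "homologous X z z' \<longleftrightarrow> (\<exists>d. d \<subseteq> triangles X \<and> symdiff z z' = bd2 d)"

definition H1 :: "'v set set \<Rightarrow> 'v set set set set" where
  "H1 X = cycles1 X // {(z, z'). z \<in> cycles1 X \<and> z' \<in> cycles1 X \<and> homologous X z z'}"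

definition H1_incl :: "'v set set \<Rightarrow> 'v set set \<Rightarrow> 'v set set set \<Rightarrow> 'v set set set" where
  "H1_incl X Y c = {z'\<in>cycles1 Y. homologous Y (SOME z. z \<in> c) z'}"

text \<open>Relative homology H_1(X,Y) (= reduced H_1 of the quotient X/Y): the class of a
  relative 1-chain z is zero iff z is a boundary modulo chains of Y.\<close>
definition rel_null :: "'v set set \<Rightarrow> 'v set set \<Rightarrow> 'v set set \<Rightarrow> bool" where
  "rel_null X Y z \<longleftrightarrow> (\<exists>d y. d \<subseteq> triangles X \<and> y \<subseteq> edges Y \<and> z = symdiff (bd2 d) y)"

text \<open>The complex to which the edge e is added: all simplices entering strictly before e,
  and the MST edges entering at the same scale as e (other than e).\<close>
definition before_edge :: "'v set set \<Rightarrow> ('v set \<Rightarrow> real) \<Rightarrow> 'v set set \<Rightarrow> 'v set \<Rightarrow> 'v set set" where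
  "before_edge K ent T e = {\<sigma>\<in>K. ent \<sigma> < ent e} \<union> {f\<in>T. ent f = ent e \<and> f \<noteq> e}"

definition critical :: "'v set set \<Rightarrow> ('v set \<Rightarrow> real) \<Rightarrow> 'v set set \<Rightarrow> 'v set \<Rightarrow> bool" where
  "critical K ent T e \<longleftrightarrow> e \<in> edges K \<and>
     (let P = before_edge K ent T e; Pe = insert e P; Qe = Qc K ent (ent e) in
        (\<exists>z\<in>cycles1 Pe. e \<in> z) \<and>
        (\<forall>z\<in>cycles1 Pe. e \<in> z \<longrightarrow> \<not> (\<exists>y\<in>cycles1 P. homologous Qe z y)))"

text \<open>Subsets S of the alive critical edges A encode the coefficient vectors of
  sum_{K in S} [K] in H_1((MST(C;alpha) \<union> \<Union> A)/MST(C;alpha)); ker f is the set of those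
  whose image in H_1(Q(C;alpha)/MST(C;alpha)) vanishes.\<close>
definition ker_f :: "'v set \<Rightarrow> 'v set set \<Rightarrow> ('v set \<Rightarrow> real) \<Rightarrow> 'v set set \<Rightarrow> real
    \<Rightarrow> 'v set set \<Rightarrow> 'v set set set" where
  "ker_f C K ent T \<alpha> A = {S. S \<subseteq> A \<and> rel_null (Qc K ent \<alpha>) (MST_at C ent T \<alpha>) S}"

text \<open>L is a set of leading variables of the system sum_j c_ij x_j = 0 whose rows span W:
  |L| = dim W and for every value of the free variables (those in A - L) there is a
  unique solution x (a subset of A).\<close>
definition leading_set :: "'a set set \<Rightarrow> 'a set \<Rightarrow> 'a set \<Rightarrow> bool" where
  "leading_set W A L \<longleftrightarrow> L \<subseteq> A \<and> card W = 2 ^ card L \<and>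
     (\<forall>F. F \<subseteq> A - L \<longrightarrow>
        (\<exists>!x. x \<subseteq> A \<and> x \<inter> (A - L) = F \<and> (\<forall>b\<in>W. even (card (b \<inter> x)))))"

definition valid_deaths :: "'v set \<Rightarrow> 'v set set \<Rightarrow> ('v set \<Rightarrow> real) \<Rightarrow> 'v set set
    \<Rightarrow> ('v set \<Rightarrow> ereal) \<Rightarrow> bool" where
  "valid_deaths C K ent T D \<longleftrightarrow>
     (\<forall>e. critical K ent T e \<longrightarrow> D e \<noteq> -\<infinity>) \<and>
     (\<forall>\<alpha>::real.
        let A = {e. critical K ent T e \<and> ent e \<le> \<alpha> \<and> \<not> D e < ereal \<alpha>};
            W = ker_f C K ent T \<alpha> A;
            L = {e. critical K ent T e \<and> D e = ereal \<alpha>}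
        in L \<subseteq> A \<and> leading_set W A L \<and>
           (\<forall>L'. leading_set W A L' \<longrightarrow> (\<Sum>e\<in>L'. ent e) \<le> (\<Sum>e\<in>L. ent e)))"

definition HoPeS_at :: "'v set \<Rightarrow> 'v set set \<Rightarrow> ('v set \<Rightarrow> real) \<Rightarrow> 'v set set
    \<Rightarrow> ('v set \<Rightarrow> ereal) \<Rightarrow> real \<Rightarrow> 'v set set" where
  "HoPeS_at C K ent T D \<alpha> = vertices_cplx C \<union>
     {e\<in>T. edge_len ent e \<le> 2 * \<alpha>} \<union>
     {e. critical K ent T e \<and> edge_len ent e \<le> 2 * \<alpha> \<and> \<not> D e \<le> ereal \<alpha>}"

end

theory Submission
  imports Defs
begin


lemma sd_comm: "symdiff A B = symdiff B A" by (auto simp: symdiff_def)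
lemma sd_assoc: "symdiff (symdiff A B) C = symdiff A (symdiff B C)" by (auto simp: symdiff_def)
lemma sd_empty[simp]: "symdiff A {} = A" "symdiff {} A = A" "symdiff A A = {}" by (auto simp: symdiff_def)
lemma sd_eq_empty: "symdiff A B = {} \<longleftrightarrow> A = B" by (auto simp: symdiff_def)
lemma sd_sub: "A \<subseteq> X \<Longrightarrow> B \<subseteq> X \<Longrightarrow> symdiff A B \<subseteq> X" by (auto simp: symdiff_def)
lemma sd_fin: "finite A \<Longrightarrow> finite B \<Longrightarrow> finite (symdiff A B)" by (auto simp: symdiff_def)
lemma sd_cancel: "symdiff A (symdiff A B) = B" by (auto simp: symdiff_def)

lemma card_sd_parity:
  assumes "finite A" "finite B"
  shows "odd (card {x\<in>symdiff A B. P x}) \<longleftrightarrow> (odd (card {x\<in>A. P x}) \<noteq> odd (card {x\<in>B. P x}))"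
proof -
  have e1: "{x\<in>A. P x} = {x\<in>A-B. P x} \<union> {x\<in>A\<inter>B. P x}" by auto
  have e2: "{x\<in>B. P x} = {x\<in>B-A. P x} \<union> {x\<in>A\<inter>B. P x}" by auto
  have e3: "{x\<in>symdiff A B. P x} = {x\<in>A-B. P x} \<union> {x\<in>B-A. P x}" by (auto simp: symdiff_def)
  have c1: "card {x\<in>A. P x} = card {x\<in>A-B. P x} + card {x\<in>A\<inter>B. P x}"
    unfolding e1 by (rule card_Un_disjoint) (use assms in auto)
  have c2: "card {x\<in>B. P x} = card {x\<in>B-A. P x} + card {x\<in>A\<inter>B. P x}"
    unfolding e2 by (rule card_Un_disjoint) (use assms in auto)
  have c3: "card {x\<in>symdiff A B. P x} = card {x\<in>A-B. P x} + card {x\<in>B-A. P x}"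
    unfolding e3 by (rule card_Un_disjoint) (use assms in auto)
  show ?thesis unfolding c1 c2 c3 by auto
qed

lemma mem_sd: "v \<in> symdiff X Y \<longleftrightarrow> (v\<in>X) \<noteq> (v\<in>Y)" by (auto simp: symdiff_def)

lemma bd1_sd: "finite A \<Longrightarrow> finite B \<Longrightarrow> bd1 (symdiff A B) = symdiff (bd1 A) (bd1 B)"
proof (rule set_eqI)
  fix v assume "finite A" "finite B"
  then have "odd (card {e\<in>symdiff A B. v \<in> e}) \<longleftrightarrow> (odd (card {e\<in>A. v\<in>e}) \<noteq> odd (card {e\<in>B. v\<in>e}))"
    by (rule card_sd_parity)
  then show "v \<in> bd1 (symdiff A B) \<longleftrightarrow> v \<in> symdiff (bd1 A) (bd1 B)"
    by (simp only: bd1_def mem_sd mem_Collect_eq)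
qed

lemma bd2_sd: "finite A \<Longrightarrow> finite B \<Longrightarrow> bd2 (symdiff A B) = symdiff (bd2 A) (bd2 B)"
proof (rule set_eqI)
  fix v assume "finite A" "finite B"
  then have "odd (card {e\<in>symdiff A B. v \<subseteq> e}) \<longleftrightarrow> (odd (card {e\<in>A. v\<subseteq>e}) \<noteq> odd (card {e\<in>B. v\<subseteq>e}))"
    by (rule card_sd_parity)
  then show "v \<in> bd2 (symdiff A B) \<longleftrightarrow> v \<in> symdiff (bd2 A) (bd2 B)"
    unfolding bd2_def mem_sd mem_Collect_eq by blast
qed

lemma bd1_empty[simp]: "bd1 {} = {}" by (simp add: bd1_def)
lemma bd2_empty[simp]: "bd2 {} = {}" by (simp add: bd2_def)

lemma bd1_edge: "u \<noteq> v \<Longrightarrow> bd1 {{u,v}} = {u,v}"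
proof -
  assume "u \<noteq> v"
  have "\<And>w. {e\<in>{{u,v}}. w \<in> e} = (if w \<in> {u,v} then {{u,v}} else {})" by auto
  then show ?thesis unfolding bd1_def by auto
qed

lemma bd2_fin: "finite d \<Longrightarrow> \<forall>t\<in>d. finite t \<Longrightarrow> finite (bd2 d)"
proof -
  assume a: "finite d" "\<forall>t\<in>d. finite t"
  have "bd2 d \<subseteq> \<Union> (Pow ` d)"
  proof
    fix e assume "e \<in> bd2 d"
    then have "odd (card {t\<in>d. e \<subseteq> t})" by (simp add: bd2_def)
    then have "{t\<in>d. e \<subseteq> t} \<noteq> {}" by (metis card.empty even_zero)
    then show "e \<in> \<Union> (Pow ` d)" by auto
  qed
  moreover have "finite (\<Union> (Pow ` d))" using a by auto
  ultimately show ?thesis by (rule finite_subset)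
qed

lemma bd2_single:
  assumes "card t = 3"
  shows "bd1 (bd2 {t}) = {}"
proof -
  obtain x y z where t: "t = {x,y,z}" and d: "x \<noteq> y" "x \<noteq> z" "y \<noteq> z"
    using assms card_3_iff by metis
  have "\<And>e. {ta\<in>{t}. e \<subseteq> ta} = (if e \<subseteq> t then {t} else {})" by auto
  then have "bd2 {t} = {e. card e = 2 \<and> e \<subseteq> t}" unfolding bd2_def by auto
  also have "\<dots> = {{x,y},{x,z},{y,z}}"
  proof (rule set_eqI, rule iffI)
    fix e assume "e \<in> {e. card e = 2 \<and> e \<subseteq> t}"
    then obtain a b where "e = {a,b}" "a \<noteq> b" "e \<subseteq> t" by (auto simp: card_2_iff)
    then show "e \<in> {{x,y},{x,z},{y,z}}" using t by auto
  next
    fix e assume "e \<in> {{x,y},{x,z},{y,z}}"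
    then show "e \<in> {e. card e = 2 \<and> e \<subseteq> t}" using t d by auto
  qed
  finally have b: "bd2 {t} = {{x,y},{x,z},{y,z}}" .
  have "\<And>w. even (card {e\<in>{{x,y},{x,z},{y,z}}. w \<in> e})"
  proof -
    fix w
    consider "w = x" | "w = y" | "w = z" | "w \<notin> {x,y,z}" by auto
    then show "even (card {e\<in>{{x,y},{x,z},{y,z}}. w \<in> e})"
    proof cases
      case 1
      then have "{e\<in>{{x,y},{x,z},{y,z}}. w \<in> e} = {{x,y},{x,z}}" using d by auto
      then show ?thesis using d by (simp add: doubleton_eq_iff)
    next
      case 2
      then have "{e\<in>{{x,y},{x,z},{y,z}}. w \<in> e} = {{x,y},{y,z}}" using d by auto
      then show ?thesis using d by (simp add: doubleton_eq_iff)
    next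
      case 3
      then have "{e\<in>{{x,y},{x,z},{y,z}}. w \<in> e} = {{x,z},{y,z}}" using d by auto
      then show ?thesis using d by (simp add: doubleton_eq_iff)
    next
      case 4
      then have "{e\<in>{{x,y},{x,z},{y,z}}. w \<in> e} = {}" by auto
      then show ?thesis by (simp only: card.empty even_zero)
    qed
  qed
  then show ?thesis unfolding b bd1_def by auto
qed

lemma insert_sd: "t \<notin> d \<Longrightarrow> insert t d = symdiff {t} d" by (auto simp: symdiff_def)

lemma bd1_bd2:
  assumes "finite d" "\<forall>t\<in>d. card t = 3"
  shows "bd1 (bd2 d) = {}"
  using assms
proof (induction d rule: finite_induct)
  case empty then show ?case by simp
next
  case (insert t d)
  have ft: "\<forall>s\<in>d. finite s" "finite t" using insert card.infinite
    by (metis insertCI zero_neq_numeral)+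
  have "bd2 (insert t d) = symdiff (bd2 {t}) (bd2 d)"
    using insert insert_sd bd2_sd by (metis finite.emptyI finite.insertI)
  moreover have "finite (bd2 {t})" using ft bd2_fin[of "{t}"] by auto
  moreover have "finite (bd2 d)" using ft insert bd2_fin by auto
  moreover have "bd1 (bd2 d) = {}" using insert by simp
  moreover have "bd1 (bd2 {t}) = {}" using insert(4) bd2_single by blast
  ultimately show ?case using bd1_sd[of "bd2 {t}" "bd2 d"] by (metis sd_empty(1))
qed



lemma adj_sym: "(u,v) \<in> adj E \<Longrightarrow> (v,u) \<in> adj E"
  by (auto simp: adj_def insert_commute)

lemma adj_rtr_sym: "(u,v) \<in> (adj E)\<^sup>* \<Longrightarrow> (v,u) \<in> (adj E)\<^sup>*"
proof -
  have "sym (adj E)" by (rule symI) (rule adj_sym)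
  then have "sym ((adj E)\<^sup>*)" by (rule sym_rtrancl)
  then show "(u,v) \<in> (adj E)\<^sup>* \<Longrightarrow> (v,u) \<in> (adj E)\<^sup>*" by (auto dest: symD)
qed

lemma walk_chain:
  assumes "(u,x) \<in> (adj E)\<^sup>*"
  shows "\<exists>c. finite c \<and> c \<subseteq> E \<and> bd1 c = symdiff {u} {x}"
  using assms
proof (induction rule: rtrancl_induct)
  case base
  show ?case by (rule exI[of _ "{}"]) simp
next
  case (step y z)
  then obtain c where c: "finite c" "c \<subseteq> E" "bd1 c = symdiff {u} {y}" by auto
  have yz: "{y,z} \<in> E" using step by (simp add: adj_def)
  show ?case
  proof (cases "y = z")
    case True then show ?thesis using c by auto
  next
    case False
    have "bd1 (symdiff c {{y,z}}) = symdiff (symdiff {u} {y}) {y,z}"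
      using bd1_sd[of c "{{y,z}}"] c bd1_edge[OF False] by simp
    also have "\<dots> = symdiff {u} {z}" using False by (auto simp: symdiff_def)
    finally show ?thesis using c yz by (intro exI[of _ "symdiff c {{y,z}}"]) (auto simp: symdiff_def)
  qed
qed

lemma even_sum_iff:
  fixes f :: "'a \<Rightarrow> nat"
  assumes "finite S"
  shows "even (sum f S) \<longleftrightarrow> even (card {w\<in>S. odd (f w)})"
  using assms
proof (induction S rule: finite_induct)
  case empty then show ?case by simp
next
  case (insert x S)
  have "{w\<in>insert x S. odd (f w)} = (if odd (f x) then insert x {w\<in>S. odd (f w)} else {w\<in>S. odd (f w)})"
    by auto
  then show ?case using insert by auto
qed

lemma parity_conn:
  assumes fc: "finite c" and cE: "c \<subseteq> E" and c2: "\<forall>g\<in>c. card g = 2"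
    and bd: "bd1 c = {a,b}" and ab: "a \<noteq> b"
  shows "(a,b) \<in> (adj E)\<^sup>*"
proof (rule ccontr)
  assume nb: "(a,b) \<notin> (adj E)\<^sup>*"
  define X where "X = {w. (a,w) \<in> (adj E)\<^sup>*}"
  define V where "V = \<Union> c"
  have fg: "\<forall>g\<in>c. finite g" using c2 card.infinite by force
  have fV: "finite V" using fc fg by (simp add: V_def)
  have fVX: "finite (V \<inter> X)" using fV by simp
  have "(\<Sum>w\<in>V\<inter>X. card {g\<in>c. w \<in> g}) = (\<Sum>g\<in>c. card {w\<in>V\<inter>X. w \<in> g})"
    using sum.swap_restrict[OF fVX fc, of "\<lambda>_ _. 1::nat" "\<lambda>w g. w \<in> g"]
    by simp
  also have "\<dots> = (\<Sum>g\<in>c. card (g \<inter> X))"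
    by (rule sum.cong) (auto simp: V_def intro!: arg_cong[where f=card])
  finally have eqs: "(\<Sum>w\<in>V\<inter>X. card {g\<in>c. w \<in> g}) = (\<Sum>g\<in>c. card (g \<inter> X))" .
  have "\<forall>g\<in>c. even (card (g \<inter> X))"
  proof
    fix g assume g: "g \<in> c"
    then obtain p q where pq: "g = {p,q}" "p \<noteq> q" using c2 by (meson card_2_iff)
    have "(p,q) \<in> adj E" using g cE pq by (auto simp: adj_def)
    then have "p \<in> X \<longleftrightarrow> q \<in> X" unfolding X_def mem_Collect_eq
      using adj_sym rtrancl.rtrancl_into_rtrancl by metis
    then have "g \<inter> X = g \<or> g \<inter> X = {}" using pq by auto
    then show "even (card (g \<inter> X))" using g c2 by auto
  qed
  then have "even (\<Sum>g\<in>c. card (g \<inter> X))" by (auto intro!: dvd_sum)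
  then have "even (card {w\<in>V\<inter>X. odd (card {g\<in>c. w \<in> g})})"
    using eqs even_sum_iff[OF fVX, of "\<lambda>w. card {g\<in>c. w \<in> g}"] by metis
  moreover have "{w\<in>V\<inter>X. odd (card {g\<in>c. w \<in> g})} = {a}"
  proof -
    have "a \<in> X" by (simp add: X_def)
    moreover have "b \<notin> X" using nb by (simp add: X_def)
    moreover have "a \<in> V"
    proof -
      have "odd (card {g\<in>c. a \<in> g})" using bd by (auto simp: bd1_def)
      then have "{g\<in>c. a \<in> g} \<noteq> {}" by (metis card.empty even_zero)
      then show ?thesis by (auto simp: V_def)
    qed
    ultimately show ?thesis using bd ab unfolding bd1_def by blast
  qed
  ultimately show False by simp
qed

lemma conn_card:
  assumes fE: "finite E" and conn: "graph_connected C E" and r: "r \<in> C"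
  shows "card (C - {r}) \<le> card E"
proof -
  let ?R = "adj E"
  define dist where "dist w = (LEAST n. (r,w) \<in> ?R ^^ n)" for w
  have reach: "\<And>w. w \<in> C \<Longrightarrow> (r,w) \<in> ?R ^^ dist w"
  proof -
    fix w assume "w \<in> C"
    then have "(r,w) \<in> ?R\<^sup>*" using conn r by (auto simp: graph_connected_def)
    then obtain n where "(r,w) \<in> ?R ^^ n" using rtrancl_power by blast
    then show "(r,w) \<in> ?R ^^ dist w" unfolding dist_def by (rule LeastI)
  qed
  have dle: "\<And>w n. (r,w) \<in> ?R ^^ n \<Longrightarrow> dist w \<le> n" unfolding dist_def by (rule Least_le)
  define pred where "pred w = (SOME p. (r,p) \<in> ?R ^^ (dist w - 1) \<and> {p,w} \<in> E)" for w
  have predp: "(r, pred w) \<in> ?R ^^ (dist w - 1) \<and> {pred w, w} \<in> E \<and> dist w \<ge> 1 \<and> dist (pred w) = dist w - 1"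
    if w: "w \<in> C - {r}" for w
  proof -
    have rw: "(r,w) \<in> ?R ^^ dist w" using reach w by auto
    have "dist w \<noteq> 0" using rw w by (metis DiffD2 insertI1 pair_in_Id_conv relpow_0_E)
    then obtain m where m: "dist w = Suc m" by (cases "dist w") auto
    then have "(r,w) \<in> ?R ^^ m O ?R" using rw by simp
    then have ex: "\<exists>p. (r,p) \<in> ?R ^^ (dist w - 1) \<and> {p,w} \<in> E" using m by (auto simp: adj_def)
    then have P: "(r, pred w) \<in> ?R ^^ (dist w - 1) \<and> {pred w, w} \<in> E"
      unfolding pred_def by (rule someI_ex)
    then have "dist (pred w) \<le> dist w - 1" using dle by blast
    moreover have "(r,w) \<in> ?R ^^ Suc (dist (pred w))"
    proof -
      have "(r, pred w) \<in> ?R ^^ dist (pred w)"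
      proof -
        have "(r, pred w) \<in> ?R\<^sup>*" using P relpow_imp_rtrancl by blast
        then obtain n where "(r,pred w) \<in> ?R ^^ n" using rtrancl_power by blast
        then show ?thesis unfolding dist_def by (rule LeastI)
      qed
      moreover have "(pred w, w) \<in> ?R" using P by (simp add: adj_def)
      ultimately show ?thesis by auto
    qed
    then have "dist w \<le> Suc (dist (pred w))" using dle by blast
    ultimately show ?thesis using P m by auto
  qed
  have inj: "inj_on (\<lambda>w. {pred w, w}) (C - {r})"
  proof (rule inj_onI)
    fix w w' assume w: "w \<in> C - {r}" and w': "w' \<in> C - {r}" and eq: "{pred w, w} = {pred w', w'}"
    show "w = w'"
    proof (rule ccontr)
      assume ne: "w \<noteq> w'"
      then have "w = pred w'" "w' = pred w" using eq by (auto simp: doubleton_eq_iff)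
      then show False using predp[OF w] predp[OF w'] by auto
    qed
  qed
  have "(\<lambda>w. {pred w, w}) ` (C - {r}) \<subseteq> E" using predp by auto
  then have "card ((\<lambda>w. {pred w, w}) ` (C - {r})) \<le> card E" using fE by (rule card_mono[rotated])
  then show ?thesis using card_image[OF inj] by simp
qed



lemma sd_sd_cancel: "symdiff (symdiff X Y) X = Y" by (auto simp: symdiff_def)

lemma swap_conn:
  assumes conn: "graph_connected C T" and ab: "(a,b) \<in> (adj T')\<^sup>*" and sub: "T - {{a,b}} \<subseteq> T'"
  shows "graph_connected C T'"
proof -
  have "adj T \<subseteq> (adj T')\<^sup>*"
  proof
    fix p assume "p \<in> adj T"
    then obtain x y where p: "p = (x,y)" "{x,y} \<in> T" by (auto simp: adj_def)
    show "p \<in> (adj T')\<^sup>*"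
    proof (cases "{x,y} = {a,b}")
      case True
      then have "(x = a \<and> y = b) \<or> (x = b \<and> y = a)" by (auto simp: doubleton_eq_iff)
      then show ?thesis using ab adj_rtr_sym p by auto
    next
      case False
      then have "{x,y} \<in> T'" using sub p by auto
      then show ?thesis using p by (auto simp: adj_def)
    qed
  qed
  then have "(adj T)\<^sup>* \<subseteq> (adj T')\<^sup>*" by (rule rtrancl_subset_rtrancl)
  then show ?thesis using conn by (auto simp: graph_connected_def)
qed

lemma tree_acyclic:
  assumes fC: "finite C" and st: "spanning_tree C K T" and Te: "\<forall>e\<in>T. e \<subseteq> C \<and> card e = 2"
    and fT: "finite T" and zT: "z \<subseteq> T" and bz: "bd1 z = {}"
  shows "z = {}"
proof (rule ccontr)
  assume "z \<noteq> {}"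
  then obtain f where fz: "f \<in> z" by auto
  have "card f = 2" using Te zT fz by auto
  then obtain a b where f: "f = {a,b}" "a \<noteq> b" unfolding card_2_iff by blast
  have fzz: "finite z" using fT zT finite_subset by auto
  let ?c = "symdiff z {f}"
  have h1: "bd1 ?c = {a,b}" using bd1_sd[of z "{f}"] fzz bz bd1_edge[OF f(2)] f by simp
  have h2: "?c \<subseteq> T - {f}" using zT fz by (auto simp: symdiff_def)
  have h3: "finite ?c" using fzz by (simp add: sd_fin)
  have h4: "\<forall>g\<in>?c. card g = 2" using h2 Te by auto
  have "(a,b) \<in> (adj (T - {f}))\<^sup>*" by (rule parity_conn[OF h3 h2 h4 h1 f(2)])
  then have conn: "graph_connected C (T - {f})"
    using swap_conn[of C T a b "T - {f}"] st f by (auto simp: spanning_tree_def)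
  have "f \<subseteq> C" using Te zT fz by auto
  then have aC: "a \<in> C" "b \<in> C" using f by auto
  have "card (C - {a}) \<le> card (T - {f})" using conn_card[OF _ conn aC(1)] fT by simp
  moreover have "card (T - {f}) = card T - 1" using fz zT fT by (simp add: subsetD)
  moreover have "card T = card C - 1" using st by (simp add: spanning_tree_def)
  moreover have "card C \<ge> 2"
  proof -
    have "{a,b} \<subseteq> C" using aC by auto
    then have "card {a,b} \<le> card C" using fC by (rule card_mono[rotated])
    then show ?thesis using f by simp
  qed
  moreover have "card (C - {a}) = card C - 1" using aC fC by simp
  ultimately show False by linarith
qed

lemma mst_path:
  assumes fC: "finite C" and fK: "finite K" and KC: "\<forall>\<sigma>\<in>K. \<sigma> \<subseteq> C"
    and mst: "is_MST C K ent T" and e: "e \<in> edges K" and eT: "e \<notin> T"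
  shows "\<exists>c. finite c \<and> c \<subseteq> {f\<in>T. ent f \<le> ent e} \<and> bd1 c = e"
proof -
  have st: "spanning_tree C K T" using mst by (simp add: is_MST_def)
  then have TK: "T \<subseteq> edges K" and conn: "graph_connected C T" and cT: "card T = card C - 1"
    by (auto simp: spanning_tree_def)
  have "T \<subseteq> K" using TK by (auto simp: edges_def)
  then have fT: "finite T" using fK by (rule finite_subset)
  obtain u v where uv: "e = {u,v}" "u \<noteq> v" using e by (auto simp: edges_def card_2_iff)
  have uvC: "u \<in> C" "v \<in> C" using e KC uv by (auto simp: edges_def)
  then have "(u,v) \<in> (adj T)\<^sup>*" using conn by (auto simp: graph_connected_def)
  from walk_chain[OF this] obtain c where c: "finite c" "c \<subseteq> T" "bd1 c = symdiff {u} {v}" by blast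
  have bc: "bd1 c = e" using c uv by (auto simp: symdiff_def)
  have "\<forall>f\<in>c. ent f \<le> ent e"
  proof (rule ccontr)
    assume "\<not> (\<forall>f\<in>c. ent f \<le> ent e)"
    then obtain f where fc: "f \<in> c" and fe: "ent e < ent f" by force
    have fT2: "f \<in> T" using fc c by auto
    then obtain a b where f: "f = {a,b}" "a \<noteq> b" using TK by (auto simp: edges_def card_2_iff)
    define T' where "T' = insert e (T - {f})"
    define c' where "c' = symdiff (symdiff c {f}) {e}"
    have fc': "finite c'" using c by (simp add: c'_def sd_fin)
    have "bd1 c' = symdiff (symdiff (bd1 c) (bd1 {f})) (bd1 {e})"
      unfolding c'_def using c by (simp add: bd1_sd sd_fin)
    also have "\<dots> = {a,b}" using bc uv f bd1_edge sd_sd_cancel by (metis sd_assoc sd_comm)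
    finally have bc': "bd1 c' = {a,b}" .
    have "e \<notin> c" using c eT by auto
    then have c'T: "c' \<subseteq> T'" using c fc by (auto simp: c'_def T'_def symdiff_def)
    have "\<forall>g\<in>c'. card g = 2" using c'T TK e by (auto simp: T'_def edges_def)
    then have "(a,b) \<in> (adj T')\<^sup>*" by (rule parity_conn[OF fc' c'T _ bc' f(2)])
    then have connT': "graph_connected C T'" using swap_conn[OF conn] f by (auto simp: T'_def)
    have "card T' = card T"
    proof -
      have "card T' = Suc (card (T - {f}))" using fT eT by (simp add: T'_def)
      moreover have "card (T - {f}) = card T - 1" using fT fT2 by simp
      moreover have "card T \<ge> 1" using fT fT2 by (metis card_0_eq empty_iff less_one not_le)
      ultimately show ?thesis by simp
    qed
    then have "spanning_tree C K T'" using connT' TK e cT by (auto simp: spanning_tree_def T'_def)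
    then have le: "(\<Sum>g\<in>T. edge_len ent g) \<le> (\<Sum>g\<in>T'. edge_len ent g)" using mst by (simp add: is_MST_def)
    have "(\<Sum>g\<in>T'. edge_len ent g) = edge_len ent e + (\<Sum>g\<in>T - {f}. edge_len ent g)"
      using fT eT by (simp add: T'_def)
    moreover have "(\<Sum>g\<in>T. edge_len ent g) = edge_len ent f + (\<Sum>g\<in>T - {f}. edge_len ent g)"
      using fT fT2 by (rule sum.remove)
    ultimately show False using le fe by (simp add: edge_len_def)
  qed
  then show ?thesis using c bc by (intro exI[of _ c]) auto
qed



lemma triangles_sub: "triangles X \<subseteq> X" by (auto simp: triangles_def)
lemma edges_sub: "edges X \<subseteq> X" by (auto simp: edges_def)
lemma triangles_mono: "X \<subseteq> X' \<Longrightarrow> triangles X \<subseteq> triangles X'" by (auto simp: triangles_def)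
lemma edges_mono: "X \<subseteq> X' \<Longrightarrow> edges X \<subseteq> edges X'" by (auto simp: edges_def)

lemma rn_sd:
  assumes fX: "finite X" and fY: "finite Y"
    and r1: "rel_null X Y z1" and r2: "rel_null X Y z2"
  shows "rel_null X Y (symdiff z1 z2)"
proof -
  obtain d1 y1 where 1: "d1 \<subseteq> triangles X" "y1 \<subseteq> edges Y" "z1 = symdiff (bd2 d1) y1"
    using r1 unfolding rel_null_def by blast
  obtain d2 y2 where 2: "d2 \<subseteq> triangles X" "y2 \<subseteq> edges Y" "z2 = symdiff (bd2 d2) y2"
    using r2 unfolding rel_null_def by blast
  have f: "finite d1" "finite d2"
    by (rule finite_subset[OF subset_trans[OF 1(1) triangles_sub] fX],
        rule finite_subset[OF subset_trans[OF 2(1) triangles_sub] fX])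
  have B: "bd2 (symdiff d1 d2) = symdiff (bd2 d1) (bd2 d2)" using f by (rule bd2_sd)
  have E: "symdiff (symdiff (bd2 d1) y1) (symdiff (bd2 d2) y2) = symdiff (symdiff (bd2 d1) (bd2 d2)) (symdiff y1 y2)"
    by (auto simp: symdiff_def)
  have "symdiff z1 z2 = symdiff (bd2 (symdiff d1 d2)) (symdiff y1 y2)"
    unfolding 1(3) 2(3) E B ..
  moreover have "symdiff d1 d2 \<subseteq> triangles X" "symdiff y1 y2 \<subseteq> edges Y"
    using 1 2 by (auto simp: symdiff_def)
  ultimately show ?thesis unfolding rel_null_def by blast
qed

lemma rn_empty: "rel_null X Y {}"
  unfolding rel_null_def by (rule exI[of _ "{}"], rule exI[of _ "{}"]) simp

lemma rn_mono: "X \<subseteq> X' \<Longrightarrow> Y \<subseteq> Y' \<Longrightarrow> rel_null X Y z \<Longrightarrow> rel_null X' Y' z"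
proof -
  assume a: "X \<subseteq> X'" "Y \<subseteq> Y'" "rel_null X Y z"
  then obtain d y where dy: "d \<subseteq> triangles X" "y \<subseteq> edges Y" "z = symdiff (bd2 d) y"
    unfolding rel_null_def by blast
  have "d \<subseteq> triangles X'" using dy(1) triangles_mono[OF a(1)] by (rule subset_trans)
  moreover have "y \<subseteq> edges Y'" using dy(2) edges_mono[OF a(2)] by (rule subset_trans)
  ultimately show ?thesis unfolding rel_null_def using dy(3) by blast
qed

lemma rn_edge: "e \<in> edges Y \<Longrightarrow> rel_null X Y {e}"
  unfolding rel_null_def by (rule exI[of _ "{}"], rule exI[of _ "{e}"]) simp

lemma rn_bd2: "d \<subseteq> triangles X \<Longrightarrow> rel_null X Y (bd2 d)"
  unfolding rel_null_def by (rule exI[of _ d], rule exI[of _ "{}"]) simp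

definition claim :: "'v set set \<Rightarrow> 'v set set \<Rightarrow> 'v set set \<Rightarrow> 'v set set \<Rightarrow> bool" where
  "claim X Y Al c \<longleftrightarrow> (\<exists>S\<subseteq>Al. rel_null X Y (symdiff c S))"

lemma cl_sd:
  assumes "finite X" "finite Y" "claim X Y Al c1" "claim X Y Al c2"
  shows "claim X Y Al (symdiff c1 c2)"
proof -
  obtain S1 S2 where "S1 \<subseteq> Al" "S2 \<subseteq> Al" "rel_null X Y (symdiff c1 S1)" "rel_null X Y (symdiff c2 S2)"
    using assms by (auto simp: claim_def)
  moreover have "symdiff (symdiff c1 S1) (symdiff c2 S2) = symdiff (symdiff c1 c2) (symdiff S1 S2)"
    by (auto simp: symdiff_def)
  ultimately show ?thesis unfolding claim_def using rn_sd[OF assms(1,2)]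
    by (metis sd_sub)
qed

lemma cl_empty: "claim X Y Al {}"
  unfolding claim_def using rn_empty by fastforce

lemma cl_fin:
  assumes fX: "finite X" and fY: "finite Y" and fF: "finite F" and h: "\<forall>g\<in>F. claim X Y Al {g}"
  shows "claim X Y Al F"
  using fF h
proof (induction F rule: finite_induct)
  case empty then show ?case using cl_empty by blast
next
  case (insert g F)
  then have "claim X Y Al (symdiff {g} F)" using cl_sd[OF fX fY] by auto
  then show ?case using insert insert_sd by metis
qed

lemma cl_trans:
  assumes "finite X" "finite Y" "rel_null X Y (symdiff c c')" "claim X Y Al c'"
  shows "claim X Y Al c"
proof -
  obtain S where S: "S \<subseteq> Al" "rel_null X Y (symdiff c' S)" using assms by (auto simp: claim_def)
  have "symdiff (symdiff c c') (symdiff c' S) = symdiff c S" by (auto simp: symdiff_def)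
  then show ?thesis using rn_sd[OF assms(1,2) assms(3) S(2)] S(1) unfolding claim_def by metis
qed

lemma lead_inj:
  assumes "leading_set W A L" "b \<in> W" "b \<subseteq> A" "b \<inter> L = {}"
  shows "b = {}"
proof (rule ccontr)
  assume "b \<noteq> {}"
  then obtain e where e: "e \<in> b" by auto
  then have "{e} \<subseteq> A - L" using assms by auto
  moreover have H: "\<forall>F. F \<subseteq> A - L \<longrightarrow> (\<exists>!x. x \<subseteq> A \<and> x \<inter> (A - L) = F \<and> (\<forall>b\<in>W. even (card (b \<inter> x))))"
    using assms(1) unfolding leading_set_def by simp
  ultimately have "\<exists>!x. x \<subseteq> A \<and> x \<inter> (A - L) = {e} \<and> (\<forall>b\<in>W. even (card (b \<inter> x)))" by simp
  then obtain x where x: "x \<subseteq> A" "x \<inter> (A - L) = {e}" "\<forall>b\<in>W. even (card (b \<inter> x))"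
    by (meson ex1_implies_ex)
  have "b \<inter> x = {e}" using x e assms(3,4) by blast
  then show False using x(3) assms(2) by fastforce
qed

lemma lead_unit:
  assumes fA: "finite A" and ls: "leading_set W A L" and WA: "\<forall>b\<in>W. b \<subseteq> A"
    and cl: "\<forall>b1\<in>W. \<forall>b2\<in>W. symdiff b1 b2 \<in> W" and eL: "e \<in> L"
  shows "\<exists>b\<in>W. b \<inter> L = {e}"
proof -
  have LA: "L \<subseteq> A" using ls by (simp add: leading_set_def)
  have fL: "finite L" using LA fA finite_subset by blast
  have fW: "finite W" using WA fA by (meson Pow_iff finite_Pow_iff finite_subset subsetI)
  have inj: "inj_on (\<lambda>b. b \<inter> L) W"
  proof (rule inj_onI)
    fix b1 b2 assume b: "b1 \<in> W" "b2 \<in> W" "b1 \<inter> L = b2 \<inter> L"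
    have "symdiff b1 b2 \<inter> L = {}" using b(3) by (auto simp: symdiff_def)
    moreover have "symdiff b1 b2 \<subseteq> A" using WA b by (simp add: sd_sub)
    ultimately have "symdiff b1 b2 = {}" using lead_inj[OF ls] cl b by blast
    then show "b1 = b2" by (simp add: sd_eq_empty)
  qed
  have sub: "(\<lambda>b. b \<inter> L) ` W \<subseteq> Pow L" by auto
  have "card ((\<lambda>b. b \<inter> L) ` W) = card (Pow L)"
    using card_image[OF inj] ls fL by (simp add: leading_set_def card_Pow)
  then have "(\<lambda>b. b \<inter> L) ` W = Pow L" using sub fL by (simp add: card_subset_eq)
  moreover have "{e} \<in> Pow L" using eL by simp
  ultimately show ?thesis by (metis imageE)
qed



locale hs =
  fixes C :: "'v set" and K :: "'v set set" and ent :: "'v set \<Rightarrow> real"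
    and T :: "'v set set" and D :: "'v set \<Rightarrow> ereal"
  assumes filt: "filtration C K ent" and mst: "is_MST C K ent T" and vd: "valid_deaths C K ent T D"
begin

definition Al where "Al b = {e. critical K ent T e \<and> edge_len ent e \<le> 2*b \<and> \<not> D e \<le> ereal b}"
definition Q where "Q b = Qc K ent b"
definition M where "M b = MST_at C ent T b"
definition cl where "cl b c = claim (Q b) (M b) (Al b) c"

lemma fC: "finite C" using filt by (simp add: filtration_def)
lemma KC: "\<forall>\<sigma>\<in>K. \<sigma> \<subseteq> C" using filt by (simp add: filtration_def)
lemma fK: "finite K"
proof -
  have "K \<subseteq> Pow C" using KC by auto
  then show ?thesis using fC by (meson finite_Pow_iff finite_subset)
qed
lemma st: "spanning_tree C K T" using mst by (simp add: is_MST_def)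
lemma TK: "T \<subseteq> edges K" using st by (simp add: spanning_tree_def)
lemma fT: "finite T"
proof -
  have "T \<subseteq> K" using TK by (auto simp: edges_def)
  then show ?thesis using fK by (rule finite_subset)
qed
lemma fQ: "finite (Q b)" unfolding Q_def Qc_def using fK by simp
lemma fM: "finite (M b)" unfolding M_def MST_at_def vertices_cplx_def using fC fT by simp
lemma Qmono: "a \<le> b \<Longrightarrow> Q a \<subseteq> Q b" by (auto simp: Q_def Qc_def)
lemma Mmono: "a \<le> b \<Longrightarrow> M a \<subseteq> M b" by (auto simp: M_def MST_at_def)
lemma crit_edge: "critical K ent T e \<Longrightarrow> e \<in> edges K" by (simp add: critical_def)
lemma fCrit: "finite {e. critical K ent T e}"
proof -
  have "{e. critical K ent T e} \<subseteq> K" using crit_edge by (auto simp: edges_def)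
  then show ?thesis using fK by (rule finite_subset)
qed

lemma T_in_M: "g \<in> T \<Longrightarrow> ent g \<le> b \<Longrightarrow> g \<in> edges (M b)"
  using TK by (auto simp: M_def MST_at_def edges_def edge_len_def)

lemma cl_T: "g \<in> T \<Longrightarrow> ent g \<le> b \<Longrightarrow> cl b {g}"
  unfolding cl_def claim_def using rn_edge[OF T_in_M] by (metis empty_subsetI sd_empty(1))

lemma vd_at: "L \<subseteq> A \<and> leading_set W A L"
  if "A = {e. critical K ent T e \<and> ent e \<le> g \<and> \<not> D e < ereal g}"
     "W = ker_f C K ent T g A" "L = {e. critical K ent T e \<and> D e = ereal g}" for A W L g
  using vd that unfolding valid_deaths_def Let_def by blast

lemma death_rel:
  assumes ce: "critical K ent T e" and De: "D e = ereal g"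
  shows "\<exists>b. finite b \<and> rel_null (Q g) (M g) b \<and> e \<in> b \<and>
           (\<forall>f\<in>b-{e}. critical K ent T f \<and> ent f \<le> g \<and> D e < D f)"
proof -
  define A where "A = {e. critical K ent T e \<and> ent e \<le> g \<and> \<not> D e < ereal g}"
  define W where "W = ker_f C K ent T g A"
  define L where "L = {e. critical K ent T e \<and> D e = ereal g}"
  have LA: "L \<subseteq> A" and ls: "leading_set W A L" using vd_at[OF A_def W_def L_def] by auto
  have fA: "finite A" using fCrit by (rule finite_subset[rotated]) (auto simp: A_def)
  have WA: "\<forall>b\<in>W. b \<subseteq> A" by (simp add: W_def ker_f_def)
  have clW: "\<forall>b1\<in>W. \<forall>b2\<in>W. symdiff b1 b2 \<in> W"
  proof (intro ballI)
    fix b1 b2 assume "b1 \<in> W" "b2 \<in> W"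
    then have h: "b1 \<subseteq> A" "b2 \<subseteq> A" "rel_null (Q g) (M g) b1" "rel_null (Q g) (M g) b2"
      by (auto simp: W_def ker_f_def Q_def M_def)
    have "symdiff b1 b2 \<subseteq> A" using h(1,2) by (rule sd_sub)
    moreover have "rel_null (Q g) (M g) (symdiff b1 b2)" using h(3,4) by (rule rn_sd[OF fQ fM])
    ultimately show "symdiff b1 b2 \<in> W" by (simp add: W_def ker_f_def Q_def M_def)
  qed
  have eL: "e \<in> L" using ce De by (simp add: L_def)
  obtain b where b: "b \<in> W" "b \<inter> L = {e}" using lead_unit[OF fA ls WA clW eL] by blast
  have bA: "b \<subseteq> A" using b WA by auto
  have "finite b" using bA fA finite_subset by auto
  moreover have "rel_null (Q g) (M g) b" using b by (simp add: W_def ker_f_def Q_def M_def)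
  moreover have "e \<in> b" using b by auto
  moreover have "\<forall>f\<in>b-{e}. critical K ent T f \<and> ent f \<le> g \<and> D e < D f"
  proof
    fix f assume f: "f \<in> b - {e}"
    then have "f \<in> A" "f \<notin> L" using bA b by auto
    then show "critical K ent T f \<and> ent f \<le> g \<and> D e < D f" using De by (auto simp: A_def L_def)
  qed
  ultimately show ?thesis by blast
qed

lemma crit_claim:
  assumes "critical K ent T e" "ent e \<le> b"
  shows "cl b {e}"
  using assms
proof (induction "card {f. critical K ent T f \<and> D e < D f}" arbitrary: e rule: less_induct)
  case less
  show ?case
  proof (cases "D e \<le> ereal b")
    case False
    have "{e} \<subseteq> Al b" using less.prems False by (simp add: Al_def edge_len_def)
    then show ?thesis unfolding cl_def claim_def using rn_empty by (metis sd_empty(3))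
  next
    case True
    have "D e \<noteq> -\<infinity>" using vd less.prems by (simp add: valid_deaths_def)
    then obtain g where g: "D e = ereal g" using True by (cases "D e") auto
    have gb: "g \<le> b" using True g by simp
    obtain bb where bb: "finite bb" "rel_null (Q g) (M g) bb" "e \<in> bb"
      "\<forall>f\<in>bb-{e}. critical K ent T f \<and> ent f \<le> g \<and> D e < D f"
      using death_rel[OF less.prems(1) g] by blast
    have "\<forall>f\<in>bb-{e}. cl b {f}"
    proof
      fix f assume f: "f \<in> bb - {e}"
      then have "critical K ent T f \<and> ent f \<le> g \<and> D e < D f" using bb(4) by blast
      then have cf: "critical K ent T f" "ent f \<le> b" "D e < D f" using gb by auto
      have "{h. critical K ent T h \<and> D f < D h} \<subset> {h. critical K ent T h \<and> D e < D h}"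
        using cf by (auto intro: less_trans)
      then have "card {h. critical K ent T h \<and> D f < D h} < card {h. critical K ent T h \<and> D e < D h}"
        by (rule psubset_card_mono[rotated]) (rule finite_subset[OF _ fCrit], auto)
      then show "cl b {f}" using less.hyps cf by blast
    qed
    then have h: "\<forall>f\<in>bb-{e}. claim (Q b) (M b) (Al b) {f}" by (simp add: cl_def)
    have "finite (bb - {e})" using bb(1) by simp
    then have c1: "cl b (bb - {e})" unfolding cl_def using h by (rule cl_fin[OF fQ fM])
    have "rel_null (Q b) (M b) bb" using rn_mono[OF Qmono[OF gb] Mmono[OF gb] bb(2)] .
    moreover have "symdiff {e} (bb - {e}) = bb" using bb(3) by (auto simp: symdiff_def)
    ultimately have "rel_null (Q b) (M b) (symdiff {e} (bb - {e}))" by simp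
    then show ?thesis using c1 unfolding cl_def by (rule cl_trans[OF fQ fM])
  qed
qed

end



context hs begin

lemma edge_claim:
  assumes "e \<in> edges K" "ent e \<le> b"
  shows "cl b {e}"
  using assms
proof (induction "card {\<sigma>\<in>K. ent \<sigma> < ent e}" arbitrary: e rule: less_induct)
  case less
  have eK: "e \<in> edges K" and eb: "ent e \<le> b" using less.prems by auto
  show ?case
  proof (cases "e \<in> T")
    case True then show ?thesis using cl_T eb by blast
  next
    case eT: False
    show ?thesis
    proof (cases "critical K ent T e")
      case True then show ?thesis using crit_claim eb by blast
    next
      case nc: False
      define P where "P = before_edge K ent T e"
      obtain c where c: "finite c" "c \<subseteq> {f\<in>T. ent f \<le> ent e}" "bd1 c = e"
        using mst_path[OF fC fK KC mst eK eT] by blast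
      obtain u v where uv: "e = {u,v}" "u \<noteq> v" using eK by (auto simp: edges_def card_2_iff)
      have ec: "e \<notin> c" using c eT by auto
      have z0: "insert e c \<in> cycles1 (insert e P)"
      proof -
        have "insert e c = symdiff {e} c" using ec by (auto simp: symdiff_def)
        then have "bd1 (insert e c) = symdiff (bd1 {e}) (bd1 c)" using c(1) by (simp add: bd1_sd)
        also have "\<dots> = {}" using c(3) uv bd1_edge[OF uv(2)] by simp
        finally have "bd1 (insert e c) = {}" .
        moreover have "insert e c \<subseteq> edges (insert e P)"
        proof
          fix f assume f: "f \<in> insert e c"
          show "f \<in> edges (insert e P)"
          proof (cases "f = e")
            case True then show ?thesis using eK by (auto simp: edges_def)
          next
            case False
            then have fc: "f \<in> T" "ent f \<le> ent e" using f c by auto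
            then have "f \<in> edges K" using TK by auto
            then show ?thesis using fc False
              by (cases "ent f < ent e") (auto simp: edges_def P_def before_edge_def)
          qed
        qed
        ultimately show ?thesis by (simp add: cycles1_def)
      qed
      have "\<exists>z\<in>cycles1 (insert e P). e \<in> z \<and> (\<exists>y\<in>cycles1 P. homologous (Qc K ent (ent e)) z y)"
        using nc eK z0 unfolding critical_def Let_def P_def by blast
      then obtain z y where zy: "z \<in> cycles1 (insert e P)" "e \<in> z" "y \<in> cycles1 P"
        "homologous (Qc K ent (ent e)) z y" by blast
      obtain d where d: "d \<subseteq> triangles (Q (ent e))" "symdiff z y = bd2 d"
        using zy(4) unfolding homologous_def Q_def by blast
      define c2 where "c2 = symdiff (z - {e}) y"
      have "symdiff {e} c2 = symdiff z y" using zy(2) by (auto simp: c2_def symdiff_def)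
      then have "rel_null (Q (ent e)) (M (ent e)) (symdiff {e} c2)" using d rn_bd2 by metis
      then have rn: "rel_null (Q b) (M b) (symdiff {e} c2)"
        using rn_mono[OF Qmono[OF eb] Mmono[OF eb]] by blast
      have c2P: "c2 \<subseteq> edges P"
      proof -
        have "z - {e} \<subseteq> edges P" using zy(1) by (auto simp: cycles1_def edges_def)
        moreover have "y \<subseteq> edges P" using zy(3) by (auto simp: cycles1_def)
        ultimately show ?thesis unfolding c2_def by (rule sd_sub)
      qed
      have PK: "edges P \<subseteq> K" using TK by (auto simp: P_def before_edge_def edges_def)
      have fc2: "finite c2" using c2P PK fK finite_subset by (metis subset_trans)
      have "\<forall>g\<in>c2. cl b {g}"
      proof
        fix g assume "g \<in> c2"
        then have gP: "g \<in> edges P" using c2P by auto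
        then consider "g \<in> K" "ent g < ent e" "card g = 2" | "g \<in> T" "ent g = ent e"
          by (auto simp: P_def before_edge_def edges_def)
        then show "cl b {g}"
        proof cases
          case 1
          have "{\<sigma>\<in>K. ent \<sigma> < ent g} \<subset> {\<sigma>\<in>K. ent \<sigma> < ent e}" using 1 by auto
          then have "card {\<sigma>\<in>K. ent \<sigma> < ent g} < card {\<sigma>\<in>K. ent \<sigma> < ent e}"
            using fK by (simp add: psubset_card_mono)
          moreover have "g \<in> edges K" using 1 by (simp add: edges_def)
          moreover have "ent g \<le> b" using 1 eb by simp
          ultimately show ?thesis using less.hyps by blast
        next
          case 2 then show ?thesis using cl_T eb by simp
        qed
      qed
      then have "\<forall>g\<in>c2. claim (Q b) (M b) (Al b) {g}" by (simp add: cl_def)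
      then have "cl b c2" unfolding cl_def using fc2 cl_fin[OF fQ fM] by blast
      then show ?thesis unfolding cl_def by (rule cl_trans[OF fQ fM rn])
    qed
  qed
qed

end


lemma homol_refl: "homologous X z z"
  unfolding homologous_def by (rule exI[of _ "{}"]) simp

lemma homol_sym: "homologous X z z' \<Longrightarrow> homologous X z' z"
  unfolding homologous_def by (metis sd_comm)

lemma homol_trans:
  assumes fX: "finite X" and h1: "homologous X z1 z2" and h2: "homologous X z2 z3"
  shows "homologous X z1 z3"
proof -
  obtain d1 where d1: "d1 \<subseteq> triangles X" "symdiff z1 z2 = bd2 d1" using h1 unfolding homologous_def by blast
  obtain d2 where d2: "d2 \<subseteq> triangles X" "symdiff z2 z3 = bd2 d2" using h2 unfolding homologous_def by blast
  have f: "finite d1" "finite d2"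
    by (rule finite_subset[OF subset_trans[OF d1(1) triangles_sub] fX],
        rule finite_subset[OF subset_trans[OF d2(1) triangles_sub] fX])
  have "symdiff z1 z3 = symdiff (symdiff z1 z2) (symdiff z2 z3)" by (auto simp: symdiff_def)
  also have "\<dots> = bd2 (symdiff d1 d2)" unfolding d1(2) d2(2) using bd2_sd[OF f] by simp
  finally have "symdiff z1 z3 = bd2 (symdiff d1 d2)" .
  moreover have "symdiff d1 d2 \<subseteq> triangles X" using d1(1) d2(1) by (rule sd_sub)
  ultimately show ?thesis unfolding homologous_def by blast
qed

definition hrel :: "'v set set \<Rightarrow> ('v set set \<times> 'v set set) set" where
  "hrel X = {(z, z'). z \<in> cycles1 X \<and> z' \<in> cycles1 X \<and> homologous X z z'}"

lemma hrel_equiv: "finite X \<Longrightarrow> equiv (cycles1 X) (hrel X)"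
  unfolding equiv_def refl_on_def sym_def trans_def hrel_def
  using homol_refl homol_sym homol_trans by blast

context hs begin

definition H where "H a = HoPeS_at C K ent T D a"

lemma H_edge_cases: "e \<in> edges (H a) \<Longrightarrow> (e \<in> T \<and> ent e \<le> a) \<or> e \<in> Al a"
  by (auto simp: H_def HoPeS_at_def edges_def vertices_cplx_def Al_def edge_len_def)

lemma Al_edges: "Al a \<subseteq> edges (H a)"
  using crit_edge by (auto simp: H_def HoPeS_at_def edges_def Al_def)

lemma M_edges_H: "edges (M a) \<subseteq> edges (H a)"
  by (auto simp: H_def HoPeS_at_def edges_def M_def MST_at_def vertices_cplx_def)

lemma H_Q: "edges (H a) \<subseteq> edges (Q a)"
proof
  fix e assume e: "e \<in> edges (H a)"
  then have "card e = 2" by (simp add: edges_def)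
  moreover from H_edge_cases[OF e] have "e \<in> K \<and> ent e \<le> a"
    using TK crit_edge by (auto simp: Al_def edges_def edge_len_def)
  ultimately show "e \<in> edges (Q a)" by (simp add: edges_def Q_def Qc_def)
qed

lemma edgesK_fin: "X \<subseteq> edges K \<Longrightarrow> finite X"
  using fK by (meson edges_sub finite_subset subset_trans)

lemma cyc_fin: "z \<in> cycles1 (H a) \<Longrightarrow> finite z"
proof -
  assume "z \<in> cycles1 (H a)"
  then have "z \<subseteq> edges (Q a)" using H_Q by (auto simp: cycles1_def)
  moreover have "edges (Q a) \<subseteq> edges K" by (auto simp: edges_def Q_def Qc_def)
  ultimately show ?thesis using edgesK_fin by blast
qed

lemma triangles_H: "triangles (H a) = {}"
  using TK crit_edge by (auto simp: triangles_def H_def HoPeS_at_def vertices_cplx_def edges_def)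

lemma inj_core:
  assumes z1: "z1 \<in> cycles1 (H a)" and z2: "z2 \<in> cycles1 (H a)" and h: "homologous (Q a) z1 z2"
  shows "z1 = z2"
proof -
  obtain d where d: "d \<subseteq> triangles (Q a)" "symdiff z1 z2 = bd2 d" using h unfolding homologous_def by blast
  define z where "z = symdiff z1 z2"
  define Y where "Y = {e\<in>T. ent e \<le> a}"
  define y where "y = z \<inter> Y"
  define S where "S = z - Y"
  define A where "A = {e. critical K ent T e \<and> ent e \<le> a \<and> \<not> D e < ereal a}"
  define W where "W = ker_f C K ent T a A"
  define L where "L = {e. critical K ent T e \<and> D e = ereal a}"
  have LA: "L \<subseteq> A" and ls: "leading_set W A L" using vd_at[OF A_def W_def L_def] by auto
  have zH: "z \<subseteq> edges (H a)" using z1 z2 unfolding z_def cycles1_def by (simp add: sd_sub)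
  have SAl: "S \<subseteq> Al a" using zH H_edge_cases by (auto simp: S_def Y_def)
  have SA: "S \<subseteq> A" using SAl by (auto simp: Al_def A_def edge_len_def)
  have SL: "S \<inter> L = {}" using SAl by (auto simp: Al_def L_def)
  have "S = symdiff (bd2 d) y" using d(2) unfolding z_def[symmetric] by (auto simp: S_def y_def symdiff_def)
  moreover have "y \<subseteq> edges (M a)" using T_in_M by (auto simp: y_def Y_def)
  ultimately have "rel_null (Q a) (M a) S" unfolding rel_null_def using d(1) by blast
  then have "S \<in> W" using SA by (simp add: W_def ker_f_def Q_def M_def)
  then have "S = {}" using lead_inj[OF ls _ SA SL] by blast
  then have zT: "z \<subseteq> T" by (auto simp: S_def Y_def)
  have "bd1 z = {}" unfolding z_def using bd1_sd[OF cyc_fin[OF z1] cyc_fin[OF z2]] z1 z2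
    by (simp add: cycles1_def)
  moreover have Te: "\<forall>e\<in>T. e \<subseteq> C \<and> card e = 2" using TK KC by (auto simp: edges_def)
  ultimately have "z = {}" using tree_acyclic[OF fC st Te fT zT] by blast
  then show ?thesis by (simp add: z_def sd_eq_empty)
qed

lemma surj_core:
  assumes z: "z \<in> cycles1 (Q a)"
  shows "\<exists>w\<in>cycles1 (H a). homologous (Q a) z w"
proof -
  have zQ: "z \<subseteq> edges (Q a)" using z by (simp add: cycles1_def)
  have QK: "edges (Q a) \<subseteq> edges K" by (auto simp: edges_def Q_def Qc_def)
  have fz: "finite z" using zQ QK edgesK_fin by blast
  have "\<forall>g\<in>z. claim (Q a) (M a) (Al a) {g}"
  proof
    fix g assume "g \<in> z"
    then have "g \<in> edges K" "ent g \<le> a" using zQ by (auto simp: edges_def Q_def Qc_def)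
    then show "claim (Q a) (M a) (Al a) {g}" using edge_claim by (simp add: cl_def)
  qed
  then have "claim (Q a) (M a) (Al a) z" using fz by (intro cl_fin[OF fQ fM])
  then obtain S where S: "S \<subseteq> Al a" "rel_null (Q a) (M a) (symdiff z S)" by (auto simp: claim_def)
  then obtain d y where dy: "d \<subseteq> triangles (Q a)" "y \<subseteq> edges (M a)" "symdiff z S = symdiff (bd2 d) y"
    unfolding rel_null_def by blast
  define w where "w = symdiff S y"
  have zw: "symdiff z w = bd2 d"
  proof -
    have "symdiff z w = symdiff (symdiff z S) y" by (auto simp: w_def symdiff_def)
    also have "\<dots> = bd2 d" unfolding dy(3) by (auto simp: symdiff_def)
    finally show ?thesis .
  qed
  have w2: "w = symdiff z (bd2 d)" using zw by (metis sd_cancel)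
  have fd: "finite d" using dy(1) fQ triangles_sub by (meson finite_subset subset_trans)
  have d3: "\<forall>t\<in>d. card t = 3" using dy(1) by (auto simp: triangles_def)
  have fb: "finite (bd2 d)" using bd2_fin[OF fd] d3 by (metis card.infinite zero_neq_numeral)
  have "bd1 w = symdiff (bd1 z) (bd1 (bd2 d))" unfolding w2 using fz fb by (rule bd1_sd)
  also have "\<dots> = {}" using z bd1_bd2[OF fd d3] by (simp add: cycles1_def)
  finally have bw: "bd1 w = {}" .
  have "w \<subseteq> edges (H a)" unfolding w_def
    using subset_trans[OF S(1) Al_edges] subset_trans[OF dy(2) M_edges_H] by (rule sd_sub)
  then have "w \<in> cycles1 (H a)" using bw by (simp add: cycles1_def)
  moreover have "homologous (Q a) z w" unfolding homologous_def using zw dy(1) by blast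
  ultimately show ?thesis by blast
qed

end


theorem mainTheorem6:
  fixes C :: "'v set" and K :: "'v set set" and ent :: "'v set \<Rightarrow> real"
    and T :: "'v set set" and D :: "'v set \<Rightarrow> ereal" and \<alpha> :: real
  assumes "filtration C K ent"
    and "graph_connected C (edges K)"
    and "is_MST C K ent T"
    and "valid_deaths C K ent T D"
    and "0 \<le> \<alpha>"
  shows "bij_betw (H1_incl (HoPeS_at C K ent T D \<alpha>) (Qc K ent \<alpha>))
           (H1 (HoPeS_at C K ent T D \<alpha>)) (H1 (Qc K ent \<alpha>))"
proof -
  interpret hs C K ent T D using assms(1,3,4) by unfold_locales
  define HH where "HH = HoPeS_at C K ent T D \<alpha>"
  define QQ where "QQ = Qc K ent \<alpha>"
  have HH: "HH = H \<alpha>" and QQ: "QQ = Q \<alpha>" by (simp_all add: HH_def H_def QQ_def Q_def)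
  have fQQ: "finite QQ" using fQ QQ by simp
  have eqv: "equiv (cycles1 QQ) (hrel QQ)" by (rule hrel_equiv[OF fQQ])
  have cycHQ: "cycles1 HH \<subseteq> cycles1 QQ" using H_Q by (auto simp: cycles1_def HH QQ)
  have homH: "\<And>z z'. homologous HH z z' \<longleftrightarrow> z = z'"
    using triangles_H by (simp add: homologous_def HH sd_eq_empty)
  have cls: "\<And>z. z \<in> cycles1 HH \<Longrightarrow> hrel HH `` {z} = {z}"
    using homH by (auto simp: hrel_def)
  have H1H: "H1 HH = (\<lambda>z. {z}) ` cycles1 HH"
    unfolding H1_def hrel_def[symmetric] quotient_def using cls by auto
  have incl: "\<And>z. z \<in> cycles1 HH \<Longrightarrow> H1_incl HH QQ {z} = hrel QQ `` {z}"
    using cycHQ by (auto simp: H1_incl_def hrel_def)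
  have H1Q: "H1 QQ = cycles1 QQ // hrel QQ" by (simp add: H1_def hrel_def)
  have inj: "inj_on (H1_incl HH QQ) (H1 HH)"
  proof (rule inj_onI)
    fix c1 c2 assume c: "c1 \<in> H1 HH" "c2 \<in> H1 HH" "H1_incl HH QQ c1 = H1_incl HH QQ c2"
    then obtain z1 z2 where z: "c1 = {z1}" "c2 = {z2}" "z1 \<in> cycles1 HH" "z2 \<in> cycles1 HH"
      unfolding H1H by blast
    then have "hrel QQ `` {z1} = hrel QQ `` {z2}" using c(3) incl by simp
    moreover have "z1 \<in> cycles1 QQ" "z2 \<in> cycles1 QQ" using z cycHQ by auto
    ultimately have "(z1, z2) \<in> hrel QQ" using eq_equiv_class_iff[OF eqv] by blast
    then have "homologous (Q \<alpha>) z1 z2" by (simp add: hrel_def QQ)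
    then have "z1 = z2" using inj_core z(3,4) HH by blast
    then show "c1 = c2" using z by simp
  qed
  have img: "H1_incl HH QQ ` H1 HH = H1 QQ"
  proof
    show "H1_incl HH QQ ` H1 HH \<subseteq> H1 QQ"
    proof
      fix X assume "X \<in> H1_incl HH QQ ` H1 HH"
      then obtain z where z: "z \<in> cycles1 HH" "X = H1_incl HH QQ {z}" unfolding H1H by blast
      then have "X = hrel QQ `` {z}" using incl by simp
      moreover have "z \<in> cycles1 QQ" using z cycHQ by auto
      ultimately show "X \<in> H1 QQ" unfolding H1Q by (simp add: quotientI)
    qed
  next
    show "H1 QQ \<subseteq> H1_incl HH QQ ` H1 HH"
    proof
      fix X assume "X \<in> H1 QQ"
      then obtain z where z: "z \<in> cycles1 QQ" "X = hrel QQ `` {z}" unfolding H1Q by (auto elim: quotientE)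
      then obtain w where w: "w \<in> cycles1 HH" "homologous QQ z w"
        using surj_core[of z \<alpha>] QQ HH by blast
      then have "(z, w) \<in> hrel QQ" using z cycHQ by (auto simp: hrel_def)
      then have "hrel QQ `` {z} = hrel QQ `` {w}" using equiv_class_eq[OF eqv] by blast
      then have "X = H1_incl HH QQ {w}" using z w incl by simp
      moreover have "{w} \<in> H1 HH" using w unfolding H1H by blast
      ultimately show "X \<in> H1_incl HH QQ ` H1 HH" by blast
    qed
  qed
  show ?thesis using inj img unfolding bij_betw_def HH_def QQ_def by blast
qed


end
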